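(* Let $1\le\ell\le n$. For every $u\in\mathbb{R}^{\binom{n}{\ell}}$, $\|\mathbf{V}(u)\|_F^2\le \ell^2\|u\|^4$.
   Context: Vectors in $\mathbb{R}^{\binom{n}{\ell}}$ are indexed by subsets $S\subseteq[n]$ with $|S|=\ell$. The voting matrix $\mathbf{V}(u)$ is the symmetric $n\times n$ matrix with $\mathbf{V}_{ii}(u)=0$ and, for $i\ne j$, $\mathbf{V}_{ij}(u)=\frac12\sum_{|S|=|T|=\ell} u_Su_T\mathbf{1}_{S\triangle T=\{i,j\}}$. $\|\cdot\|_F$ is the Frobenius norm. *)

theory Defs
  imports Main "HOL-Analysis.Analysis"
begin

text \<open>Index set of vectors in R^(n choose l): l-subsets of [n] = {0..<n}.\<close>
definition lsubsets :: "nat \<Rightarrow> nat \<Rightarrow> nat set set" where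
  "lsubsets n l = {S. S \<subseteq> {..<n} \<and> card S = l}"

definition voting_matrix :: "nat \<Rightarrow> nat \<Rightarrow> (nat set \<Rightarrow> real) \<Rightarrow> nat \<Rightarrow> nat \<Rightarrow> real" where
  "voting_matrix n l u i j =
     (if i = j then 0
      else (1/2) * (\<Sum>S\<in>lsubsets n l. \<Sum>T\<in>lsubsets n l.
                      (if (S - T) \<union> (T - S) = {i, j} then u S * u T else 0)))"

definition frob_norm_sq :: "nat \<Rightarrow> (nat \<Rightarrow> nat \<Rightarrow> real) \<Rightarrow> real" where
  "frob_norm_sq n M = (\<Sum>i<n. \<Sum>j<n. (M i j)^2)"

definition vec_norm_sq :: "nat \<Rightarrow> nat \<Rightarrow> (nat set \<Rightarrow> real) \<Rightarrow> real" where
  "vec_norm_sq n l u = (\<Sum>S\<in>lsubsets n l. (u S)^2)"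

end

theory Submission
  imports Defs
begin

lemma L2_set_sum_le:
  fixes A :: "'b \<Rightarrow> 'a \<Rightarrow> real"
  assumes "finite I"
  shows "L2_set (\<lambda>p. \<Sum>R\<in>I. A R p) X \<le> (\<Sum>R\<in>I. L2_set (A R) X)"
  using assms
proof (induction I rule: finite_induct)
  case empty
  then show ?case by (simp add: L2_set_def)
next
  case (insert x F)
  have "L2_set (\<lambda>p. \<Sum>R\<in>insert x F. A R p) X = L2_set (\<lambda>p. A x p + (\<Sum>R\<in>F. A R p)) X"
    using insert by simp
  also have "\<dots> \<le> L2_set (A x) X + L2_set (\<lambda>p. \<Sum>R\<in>F. A R p) X"
    by (rule L2_set_triangle_ineq)
  also have "\<dots> \<le> L2_set (A x) X + (\<Sum>R\<in>F. L2_set (A R) X)"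
    using insert by simp
  finally show ?case using insert by simp
qed

lemma finite_lsubsets: "finite (lsubsets n l)"
  unfolding lsubsets_def by (rule finite_subset[of _ "Pow {..<n}"]) auto

lemma V_alt:
  fixes u :: "nat set \<Rightarrow> real"
  assumes l: "1 \<le> l" and ij: "i < n" "j < n" "i \<noteq> j"
  shows "voting_matrix n l u i j =
    (\<Sum>R\<in>{R\<in>lsubsets n (l-1). i \<notin> R \<and> j \<notin> R}. u (insert i R) * u (insert j R))"
proof -
  let ?L = "lsubsets n l"
  let ?R = "{R\<in>lsubsets n (l-1). i \<notin> R \<and> j \<notin> R}"
  let ?P = "\<lambda>S T. (S - T) \<union> (T - S) = {i, j}"
  let ?Q = "{p\<in>?L \<times> ?L. ?P (fst p) (snd p)}"
  let ?g1 = "\<lambda>R. (insert i R, insert j R)"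
  let ?g2 = "\<lambda>R. (insert j R, insert i R)"
  have fL: "finite ?L" by (rule finite_lsubsets)
  have fR: "finite ?R" using finite_lsubsets[of n "l-1"] by simp
  have "(\<Sum>S\<in>?L. \<Sum>T\<in>?L. (if ?P S T then u S * u T else 0))
      = (\<Sum>p\<in>?L \<times> ?L. (if ?P (fst p) (snd p) then u (fst p) * u (snd p) else 0))"
    by (simp add: sum.cartesian_product case_prod_beta)
  also have "\<dots> = (\<Sum>p\<in>?Q. u (fst p) * u (snd p))"
    using fL by (simp add: sum.inter_filter)
  also have "?Q = ?g1 ` ?R \<union> ?g2 ` ?R"
  proof (intro equalityI subsetI)
    fix p assume p: "p \<in> ?Q"
    obtain S T where pST: "p = (S, T)" by (cases p)
    have S: "S \<subseteq> {..<n}" "card S = l" and T: "T \<subseteq> {..<n}" "card T = l"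
      and PST: "?P S T" using p pST by (auto simp: lsubsets_def)
    have fS: "finite S" and fT: "finite T"
      using S T finite_subset by auto
    have cS: "card S = card (S \<inter> T) + card (S - T)"
      using fS by (metis Diff_Diff_Int card_Diff_subset_Int finite_Int inf.cobounded1 add.commute
          card_Diff_subset Int_lower1 le_add_diff_inverse2 card_mono)
    have cT: "card T = card (S \<inter> T) + card (T - S)"
      using fT by (metis Int_commute Diff_Diff_Int card_Diff_subset_Int finite_Int inf.cobounded1 add.commute
          card_Diff_subset Int_lower1 le_add_diff_inverse2 card_mono)
    have eqc: "card (S - T) = card (T - S)" using cS cT S T by simp
    have disj: "(S - T) \<inter> (T - S) = {}" by auto
    have "(S - T = {i} \<and> T - S = {j}) \<or> (S - T = {j} \<and> T - S = {i})"
    proof -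
      have sub1: "S - T \<subseteq> {i, j}" "T - S \<subseteq> {i, j}" using PST by auto
      have un: "i \<in> (S - T) \<union> (T - S)" "j \<in> (S - T) \<union> (T - S)" using PST by auto
      show ?thesis
      proof (cases "i \<in> S - T")
        case True
        then have "i \<notin> T - S" by auto
        show ?thesis
        proof (cases "j \<in> S - T")
          case True
          then have "S - T = {i, j}" using \<open>i \<in> S - T\<close> sub1 by auto
          have c2: "card (S - T) = 2" using \<open>S - T = {i,j}\<close> ij by simp
          have "T - S = {}" using \<open>S - T = {i,j}\<close> sub1 disj by auto
          then have "card (T - S) = 0" by (simp only: card.empty)
          then have False using eqc c2 by simp
          then show ?thesis ..
        next
          case False
          then show ?thesis using \<open>i \<in> S - T\<close> sub1 un \<open>i \<notin> T - S\<close> by blast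
        qed
      next
        case False
        then have iT: "i \<in> T - S" using un by auto
        show ?thesis
        proof (cases "j \<in> T - S")
          case True
          then have "T - S = {i, j}" using iT sub1 by auto
          have c2: "card (T - S) = 2" using \<open>T - S = {i,j}\<close> ij by simp
          have "S - T = {}" using \<open>T - S = {i,j}\<close> sub1 disj by auto
          then have "card (S - T) = 0" by (simp only: card.empty)
          then have False using eqc c2 by simp
          then show ?thesis ..
        next
          case False
          then show ?thesis using iT sub1 un \<open>i \<notin> S - T\<close> by blast
        qed
      qed
    qed
    moreover have c1: "card (S - T) = 1" using calculation by (elim disjE) simp_all
    moreover have cI: "card (S \<inter> T) = l - 1" using cS S c1 by simp
    moreover have "S \<inter> T \<subseteq> {..<n}" using S by auto
    ultimately show "p \<in> ?g1 ` ?R \<union> ?g2 ` ?R"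
    proof (elim disjE conjE)
      assume a: "S - T = {i}" "T - S = {j}"
      have "S = insert i (S \<inter> T)" "T = insert j (S \<inter> T)" using a by auto
      moreover have "S \<inter> T \<in> ?R" using a cI \<open>S \<inter> T \<subseteq> {..<n}\<close> by (auto simp: lsubsets_def)
      ultimately show ?thesis using pST by (metis (no_types, lifting) UnI1 image_eqI)
    next
      assume a: "S - T = {j}" "T - S = {i}"
      have "S = insert j (S \<inter> T)" "T = insert i (S \<inter> T)" using a by auto
      moreover have "S \<inter> T \<in> ?R" using a cI \<open>S \<inter> T \<subseteq> {..<n}\<close> by (auto simp: lsubsets_def)
      ultimately show ?thesis using pST by (metis (no_types, lifting) UnI2 image_eqI)
    qed
  next
    fix p assume "p \<in> ?g1 ` ?R \<union> ?g2 ` ?R"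
    then obtain R where R: "R \<in> ?R" and p: "p = ?g1 R \<or> p = ?g2 R" by auto
    have fRR: "finite R" using R finite_subset by (auto simp: lsubsets_def)
    have cR: "card R = l - 1" "R \<subseteq> {..<n}" "i \<notin> R" "j \<notin> R" using R by (auto simp: lsubsets_def)
    have "insert i R \<in> ?L" "insert j R \<in> ?L" using cR fRR ij l by (auto simp: lsubsets_def)
    moreover have "?P (insert i R) (insert j R)" "?P (insert j R) (insert i R)" using cR ij by auto
    ultimately show "p \<in> ?Q" using p by (elim disjE) simp_all
  qed
  also have "(\<Sum>p\<in>?g1 ` ?R \<union> ?g2 ` ?R. u (fst p) * u (snd p))
      = (\<Sum>p\<in>?g1 ` ?R. u (fst p) * u (snd p)) + (\<Sum>p\<in>?g2 ` ?R. u (fst p) * u (snd p))"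
  proof (rule sum.union_disjoint)
    show "finite (?g1 ` ?R)" "finite (?g2 ` ?R)" using fR by simp_all
    show "?g1 ` ?R \<inter> ?g2 ` ?R = {}"
    proof (rule ccontr)
      assume "?g1 ` ?R \<inter> ?g2 ` ?R \<noteq> {}"
      then obtain R1 R2 where "R1 \<in> ?R" "R2 \<in> ?R" "?g1 R1 = ?g2 R2" by blast
      then have "i \<in> insert j R2" "i \<notin> R2" by auto
      then show False using ij by simp
    qed
  qed
  also have "(\<Sum>p\<in>?g1 ` ?R. u (fst p) * u (snd p)) = (\<Sum>R\<in>?R. u (insert i R) * u (insert j R))"
    by (subst sum.reindex) (simp_all add: inj_on_def, metis Diff_insert_absorb)
  also have "(\<Sum>p\<in>?g2 ` ?R. u (fst p) * u (snd p)) = (\<Sum>R\<in>?R. u (insert i R) * u (insert j R))"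
    by (subst sum.reindex) (simp_all add: inj_on_def mult.commute, metis Diff_insert_absorb)
  finally show ?thesis using ij unfolding voting_matrix_def by simp
qed

lemma double_count:
  fixes u :: "nat set \<Rightarrow> real"
  assumes l: "1 \<le> l"
  shows "(\<Sum>R\<in>lsubsets n (l-1). \<Sum>i<n. (if i \<notin> R then u (insert i R) else 0)^2)
     = real l * vec_norm_sq n l u"
proof -
  let ?Rs = "lsubsets n (l-1)"
  let ?L = "lsubsets n l"
  have fin: "finite ?Rs" "finite ?L" by (rule finite_lsubsets)+
  have "(\<Sum>R\<in>?Rs. \<Sum>i<n. (if i \<notin> R then u (insert i R) else 0)^2)
      = (\<Sum>R\<in>?Rs. \<Sum>i\<in>{..<n} - R. (u (insert i R))^2)"
  proof (rule sum.cong[OF refl])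
    fix R assume "R \<in> ?Rs"
    have "(\<Sum>i<n. (if i \<notin> R then u (insert i R) else 0)^2)
        = (\<Sum>i<n. (if i \<notin> R then (u (insert i R))^2 else 0))"
      by (rule sum.cong) auto
    also have "\<dots> = (\<Sum>i\<in>{i\<in>{..<n}. i \<notin> R}. (u (insert i R))^2)"
      by (rule sum.inter_filter[symmetric]) simp
    also have "{i\<in>{..<n}. i \<notin> R} = {..<n} - R" by auto
    finally show "(\<Sum>i<n. (if i \<notin> R then u (insert i R) else 0)^2)
        = (\<Sum>i\<in>{..<n} - R. (u (insert i R))^2)" .
  qed
  also have "\<dots> = (\<Sum>p\<in>Sigma ?Rs (\<lambda>R. {..<n} - R). (u (insert (snd p) (fst p)))^2)"
    using fin by (subst sum.Sigma) (auto simp: case_prod_beta)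
  also have "\<dots> = (\<Sum>q\<in>Sigma ?L (\<lambda>S. S). (u (fst q))^2)"
  proof -
    have bij: "bij_betw (\<lambda>p. (insert (snd p) (fst p), snd p)) (Sigma ?Rs (\<lambda>R. {..<n} - R)) (Sigma ?L (\<lambda>S. S))"
    proof (rule bij_betw_byWitness[where f' = "\<lambda>q. (fst q - {snd q}, snd q)"])
      show "\<forall>a\<in>Sigma ?Rs (\<lambda>R. {..<n} - R). (fst (insert (snd a) (fst a), snd a) - {snd (insert (snd a) (fst a), snd a)},
          snd (insert (snd a) (fst a), snd a)) = a" by auto
      show "\<forall>a'\<in>Sigma ?L (\<lambda>S. S). (insert (snd (fst a' - {snd a'}, snd a')) (fst (fst a' - {snd a'}, snd a')),
          snd (fst a' - {snd a'}, snd a')) = a'" by auto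
      show "(\<lambda>p. (insert (snd p) (fst p), snd p)) ` Sigma ?Rs (\<lambda>R. {..<n} - R) \<subseteq> Sigma ?L (\<lambda>S. S)"
      proof
        fix q assume "q \<in> (\<lambda>p. (insert (snd p) (fst p), snd p)) ` Sigma ?Rs (\<lambda>R. {..<n} - R)"
        then obtain R i where q: "q = (insert i R, i)" and R: "R \<subseteq> {..<n}" "card R = l - 1" "i < n" "i \<notin> R"
          by (auto simp: lsubsets_def)
        have "finite R" using R finite_subset by auto
        then show "q \<in> Sigma ?L (\<lambda>S. S)" using q R l by (auto simp: lsubsets_def)
      qed
      show "(\<lambda>q. (fst q - {snd q}, snd q)) ` Sigma ?L (\<lambda>S. S) \<subseteq> Sigma ?Rs (\<lambda>R. {..<n} - R)"
      proof
        fix q assume "q \<in> (\<lambda>q. (fst q - {snd q}, snd q)) ` Sigma ?L (\<lambda>S. S)"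
        then obtain S i where q: "q = (S - {i}, i)" and S: "S \<subseteq> {..<n}" "card S = l" "i \<in> S"
          by (auto simp: lsubsets_def)
        then show "q \<in> Sigma ?Rs (\<lambda>R. {..<n} - R)" using q S by (auto simp: lsubsets_def)
      qed
    qed
    show ?thesis using sum.reindex_bij_betw[OF bij, of "\<lambda>q. (u (fst q))^2"] by simp
  qed
  also have "\<dots> = (\<Sum>S\<in>?L. \<Sum>i\<in>S. (u S)^2)"
    using fin by (subst sum.Sigma) (auto simp: case_prod_beta lsubsets_def intro: finite_subset)
  also have "\<dots> = (\<Sum>S\<in>?L. real l * (u S)^2)"
    by (rule sum.cong) (auto simp: lsubsets_def)
  also have "\<dots> = real l * vec_norm_sq n l u"
    by (simp add: vec_norm_sq_def sum_distrib_left)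
  finally show ?thesis .
qed

theorem lemma6:
  fixes n l :: nat and u :: "nat set \<Rightarrow> real"
  assumes "1 \<le> l" and "l \<le> n"
  shows "frob_norm_sq n (voting_matrix n l u) \<le> (real l)^2 * (vec_norm_sq n l u)^2"
proof -
  let ?Rs = "lsubsets n (l-1)"
  let ?X = "{..<n} \<times> {..<n}"
  define a where "a R i = (if i \<notin> R then u (insert i R) else 0)" for R :: "nat set" and i :: nat
  define A where "A R p = (if fst p \<noteq> snd p then a R (fst p) * a R (snd p) else 0)"
    for R :: "nat set" and p :: "nat \<times> nat"
  let ?V = "voting_matrix n l u"
  have finRs: "finite ?Rs" by (rule finite_lsubsets)
  have Vp: "?V (fst p) (snd p) = (\<Sum>R\<in>?Rs. A R p)" if p: "p \<in> ?X" for p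
  proof (cases "fst p = snd p")
    case True
    then show ?thesis by (simp add: A_def voting_matrix_def)
  next
    case False
    have "?V (fst p) (snd p) = (\<Sum>R\<in>{R\<in>?Rs. fst p \<notin> R \<and> snd p \<notin> R}. u (insert (fst p) R) * u (insert (snd p) R))"
      using V_alt[OF assms(1), of "fst p" n "snd p" u] p False by auto
    also have "\<dots> = (\<Sum>R\<in>?Rs. if fst p \<notin> R \<and> snd p \<notin> R then u (insert (fst p) R) * u (insert (snd p) R) else 0)"
      using finRs by (rule sum.inter_filter)
    also have "\<dots> = (\<Sum>R\<in>?Rs. A R p)"
      by (rule sum.cong) (auto simp: A_def a_def False)
    finally show ?thesis .
  qed
  have "frob_norm_sq n ?V = (\<Sum>p\<in>?X. (?V (fst p) (snd p))^2)"
    unfolding frob_norm_sq_def by (simp add: sum.cartesian_product case_prod_beta)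
  also have "\<dots> = (\<Sum>p\<in>?X. (\<Sum>R\<in>?Rs. A R p)^2)"
    by (rule sum.cong) (simp_all add: Vp)
  also have "\<dots> = (L2_set (\<lambda>p. \<Sum>R\<in>?Rs. A R p) ?X)^2"
    unfolding L2_set_def by (simp add: sum_nonneg)
  also have "\<dots> \<le> (\<Sum>R\<in>?Rs. L2_set (A R) ?X)^2"
    by (rule power_mono[OF L2_set_sum_le[OF finRs]]) simp
  also have "(\<Sum>R\<in>?Rs. L2_set (A R) ?X) \<le> (\<Sum>R\<in>?Rs. \<Sum>i<n. (a R i)^2)"
  proof (rule sum_mono)
    fix R
    have "(\<Sum>p\<in>?X. (A R p)^2) \<le> (\<Sum>p\<in>?X. (a R (fst p))^2 * (a R (snd p))^2)"
      by (rule sum_mono) (auto simp: A_def power_mult_distrib)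
    also have "\<dots> = (\<Sum>i<n. (a R i)^2)^2"
      by (simp add: power2_eq_square sum_product sum.cartesian_product case_prod_beta)
    finally have le: "(\<Sum>p\<in>?X. (A R p)^2) \<le> (\<Sum>i<n. (a R i)^2)^2" .
    have "L2_set (A R) ?X \<le> sqrt ((\<Sum>i<n. (a R i)^2)^2)"
      unfolding L2_set_def using le by (rule real_sqrt_le_mono)
    also have "\<dots> = (\<Sum>i<n. (a R i)^2)" by (simp add: sum_nonneg)
    finally show "L2_set (A R) ?X \<le> (\<Sum>i<n. (a R i)^2)" .
  qed
  then have "(\<Sum>R\<in>?Rs. L2_set (A R) ?X)^2 \<le> (\<Sum>R\<in>?Rs. \<Sum>i<n. (a R i)^2)^2"
    by (rule power_mono) (simp add: sum_nonneg)
  also have "(\<Sum>R\<in>?Rs. \<Sum>i<n. (a R i)^2) = real l * vec_norm_sq n l u"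
    unfolding a_def by (rule double_count[OF assms(1)])
  finally show ?thesis by (simp add: power_mult_distrib)
qed

end
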